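(* Let $x \in \mathbb{R}^p$ be a random vector that follows the block-independent model with blocks of sizes $d_j$, and let $K = \max_{1\le i \le p} \mathbb{E}x_i^4$ be the largest fourth moment of the entries of $x$. Then for every deterministic matrix $A \in \mathbb{R}^{p\times p}$, $$\operatorname{Var}(x^\mathsf{T} A x) \le \|A\|^2\Big(K\sum_j d_j^2 + 2p\Big),$$ where $\|A\|$ is the spectral (operator) norm.
   Context: Block-independent model: a random vector $x \in \mathbb{R}^p$ follows the block-independent model with blocks of sizes $d_j$ if $\mathbb{E}x = 0$, $\mathbb{E} x x^\mathsf{T} = I_p$ (isotropy), and the coordinate index set $[p]$ is partitioned into disjoint blocks $I_1, I_2,\dots$ with $|I_j| = d_j$ such that the sub-vectors $(x_i)_{i \in I_j}$, $j=1,2,\dots$, are mutually independent (entries within the same block may be dependent). *)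

theory Defs
  imports "HOL-Analysis.Analysis" "HOL-Probability.Probability"
begin

text \<open>Block-independent model for a random vector x in R^p, where the coordinate
index set is the finite type 'n (p = CARD('n)) and P is the partition of the
coordinates into blocks.\<close>

definition block_independent_model ::
  "'a measure \<Rightarrow> ('a \<Rightarrow> real^'n::finite) \<Rightarrow> 'n set set \<Rightarrow> bool" where
  "block_independent_model M x P \<longleftrightarrow>
     prob_space M \<and>
     x \<in> borel_measurable M \<and>
     (\<forall>i. integrable M (\<lambda>\<omega>. x \<omega> $ i) \<and> integral\<^sup>L M (\<lambda>\<omega>. x \<omega> $ i) = 0) \<and>
     (\<forall>i j. integrable M (\<lambda>\<omega>. x \<omega> $ i * x \<omega> $ j) \<and>
            integral\<^sup>L M (\<lambda>\<omega>. x \<omega> $ i * x \<omega> $ j) = (if i = j then 1 else 0)) \<and>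
     partition_on UNIV P \<and>
     prob_space.indep_vars M (\<lambda>B. Pi\<^sub>M B (\<lambda>_. borel))
        (\<lambda>B \<omega>. restrict (\<lambda>i. x \<omega> $ i) B) P"

definition var_of :: "'a measure \<Rightarrow> ('a \<Rightarrow> real) \<Rightarrow> real" where
  "var_of M X = integral\<^sup>L M (\<lambda>\<omega>. (X \<omega> - integral\<^sup>L M X)\<^sup>2)"

end

theory Submission
  imports Defs
begin


lemma uv: "(p::real)*q \<le> (p^2+q^2)/2"
proof -
  have "2*p*q \<le> p^2+q^2" by (rule sum_squares_bound)
  then have "2*(p*q) \<le> p^2+q^2" by (simp add: mult.assoc)
  then show ?thesis by (simp add: field_simps)
qed

lemma am4: fixes a b c d :: real shows "\<bar>a*b*c*d\<bar> \<le> (a^4+b^4+c^4+d^4)/4"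
proof -
  have 1: "\<bar>a*b\<bar> \<le> (a^2+b^2)/2" using sum_squares_bound[of "\<bar>a\<bar>" "\<bar>b\<bar>"]
    by (simp add: abs_mult)
  have 2: "\<bar>c*d\<bar> \<le> (c^2+d^2)/2" using sum_squares_bound[of "\<bar>c\<bar>" "\<bar>d\<bar>"]
    by (simp add: abs_mult)
  have "\<bar>a*b*c*d\<bar> = \<bar>a*b\<bar> * \<bar>c*d\<bar>" by (simp add: abs_mult)
  also have "\<dots> \<le> ((a^2+b^2)/2) * ((c^2+d^2)/2)" by (intro mult_mono 1 2) auto
  also have "\<dots> \<le> (((a^2+b^2)/2)^2 + ((c^2+d^2)/2)^2)/2"
    by (rule uv)
  also have "\<dots> \<le> (a^4+b^4+c^4+d^4)/4"
  proof -
    have "(a^2+b^2)^2 \<le> 2*(a^4+b^4)" using sum_squares_bound[of "a^2" "b^2"]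
      by (simp add: power2_eq_square power4_eq_xxxx algebra_simps)
    moreover have "(c^2+d^2)^2 \<le> 2*(c^4+d^4)" using sum_squares_bound[of "c^2" "d^2"]
      by (simp add: power2_eq_square power4_eq_xxxx algebra_simps)
    ultimately show ?thesis by (simp add: power_divide)
  qed
  finally show ?thesis .
qed


lemma pl_bound:
  fixes f :: "'n::finite \<Rightarrow> real"
  assumes "length L \<le> 4"
  shows "\<bar>prod_list (map f L)\<bar> \<le> 1 + (\<Sum>m\<in>UNIV. f m ^ 4)"
proof -
  define L' where "L' = map f L @ replicate (4 - length L) 1"
  have len: "length L' = 4" using assms by (simp add: L'_def)
  have pe: "prod_list (map f L) = prod_list L'" by (simp add: L'_def)
  have S0: "0 \<le> (\<Sum>m\<in>UNIV. f m ^ 4)" by (intro sum_nonneg) simp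
  have el: "e ^ 4 \<le> 1 + (\<Sum>m\<in>UNIV. f m ^ 4)" if "e \<in> set L'" for e
  proof -
    from that consider "e = 1" | m where "e = f m" by (auto simp: L'_def)
    then show ?thesis
    proof cases
      case 1 then show ?thesis using S0 by simp
    next
      case 2
      have "f m ^ 4 \<le> (\<Sum>m\<in>UNIV. f m ^ 4)"
        by (rule member_le_sum) auto
      then show ?thesis using 2 by simp
    qed
  qed
  have "\<exists>a b c d. L' = [a,b,c,d]" using len by (auto simp add: length_Suc_conv numeral_eq_Suc)
  then obtain a b c d where L'eq: "L' = [a,b,c,d]" by blast
  have "\<bar>prod_list L'\<bar> = \<bar>a*b*c*d\<bar>" by (simp add: L'eq mult.assoc)
  also have "\<dots> \<le> (a^4+b^4+c^4+d^4)/4" by (rule am4)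
  also have "\<dots> \<le> 1 + (\<Sum>m\<in>UNIV. f m ^ 4)" using el[of a] el[of b] el[of c] el[of d] by (simp add: L'eq)
  finally show ?thesis using pe by simp
qed

locale bim = prob_space M for M :: "'a measure" +
  fixes x :: "'a \<Rightarrow> real^'n::finite" and P :: "'n set set"
  assumes xm: "x \<in> borel_measurable M"
  and mean0: "\<And>i. integral\<^sup>L M (\<lambda>\<omega>. x \<omega> $ i) = 0"
  and cov: "\<And>i j. integral\<^sup>L M (\<lambda>\<omega>. x \<omega> $ i * x \<omega> $ j) = (if i = j then 1 else 0)"
  and part: "partition_on UNIV P"
  and ind: "indep_vars (\<lambda>B. Pi\<^sub>M B (\<lambda>_. borel)) (\<lambda>B \<omega>. restrict (\<lambda>i. x \<omega> $ i) B) P"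
  and m4: "\<And>i. integrable M (\<lambda>\<omega>. (x \<omega> $ i)^4)"
begin

definition blk :: "'n \<Rightarrow> 'n set" where "blk i = (THE B. B \<in> P \<and> i \<in> B)"

lemma blk_ex1: "\<exists>!B. B \<in> P \<and> i \<in> B"
proof -
  have "i \<in> \<Union>P" using partition_onD1[OF part] by auto
  then obtain B where "B \<in> P" "i \<in> B" by auto
  moreover have "C = B" if "C \<in> P" "i \<in> C" for C
    using partition_onD2[OF part] that \<open>B \<in> P\<close> \<open>i \<in> B\<close>
    by (metis disjnt_iff pairwiseD)
  ultimately show ?thesis by blast
qed

lemma blk_in: "blk i \<in> P" and mem_blk: "i \<in> blk i"
  using theI'[OF blk_ex1[of i]] unfolding blk_def by auto

lemma blk_eq: "B \<in> P \<Longrightarrow> i \<in> B \<Longrightarrow> blk i = B"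
  using blk_ex1[of i] blk_in[of i] mem_blk[of i] by blast

lemma finP: "finite P" by (rule finite_subset[of _ "Pow UNIV"]) auto

lemma mem_iff: "B \<in> P \<Longrightarrow> i \<in> B \<longleftrightarrow> B = blk i"
  using blk_eq mem_blk by blast

lemma xi_meas[measurable]: "(\<lambda>\<omega>. x \<omega> $ i) \<in> borel_measurable M"
  using measurable_compose[OF xm borel_measurable_nth] by simp

lemma pl_meas: "(\<lambda>\<omega>. prod_list (map (\<lambda>m. x \<omega> $ m) L)) \<in> borel_measurable M"
  by (induction L) auto

lemma pl_int: assumes "length L \<le> 4" shows "integrable M (\<lambda>\<omega>. prod_list (map (\<lambda>m. x \<omega> $ m) L))"
proof -
  have I: "integrable M (\<lambda>\<omega>. 1 + (\<Sum>m\<in>UNIV. (x \<omega> $ m) ^ 4))"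
    using m4 by (intro Bochner_Integration.integrable_add integrable_sum) auto
  have A: "AE \<omega> in M. norm (prod_list (map (\<lambda>m. x \<omega> $ m) L)) \<le> norm (1 + (\<Sum>m\<in>UNIV. (x \<omega> $ m) ^ 4))"
    using pl_bound[OF assms]
    by (intro AE_I2) (auto simp: sum_nonneg)
  show ?thesis by (rule Bochner_Integration.integrable_bound[OF I pl_meas A])
qed

lemma pl_split: "prod_list (map g L) = (\<Prod>B\<in>P. prod_list (map g (filter (\<lambda>m. m \<in> B) L)))"
proof (induction L)
  case Nil then show ?case by simp
next
  case (Cons a L)
  have "(\<Prod>B\<in>P. prod_list (map g (filter (\<lambda>m. m \<in> B) (a # L))))
      = (\<Prod>B\<in>P. (if B = blk a then g a else 1) * prod_list (map g (filter (\<lambda>m. m \<in> B) L)))"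
    by (intro prod.cong refl) (auto simp: mem_iff)
  also have "\<dots> = g a * (\<Prod>B\<in>P. prod_list (map g (filter (\<lambda>m. m \<in> B) L)))"
    by (simp add: prod.distrib prod.delta' finP blk_in)
  finally show ?case using Cons by simp
qed

lemma filt_meas: "set L \<subseteq> B \<Longrightarrow> (\<lambda>v::'n\<Rightarrow>real. prod_list (map v L)) \<in> borel_measurable (Pi\<^sub>M B (\<lambda>_. borel))"
proof (induction L)
  case Nil then show ?case by simp
next
  case (Cons a L)
  have c: "(\<lambda>v::'n\<Rightarrow>real. v a) \<in> borel_measurable (Pi\<^sub>M B (\<lambda>_. borel))"
    using Cons.prems by (intro measurable_component_singleton) auto
  have "(\<lambda>v::'n\<Rightarrow>real. prod_list (map v L)) \<in> borel_measurable (Pi\<^sub>M B (\<lambda>_. borel))"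
    using Cons by auto
  then show ?case using c by (simp add: borel_measurable_times)
qed

lemma pf:
  assumes "length L \<le> 4"
  shows "integral\<^sup>L M (\<lambda>\<omega>. prod_list (map (\<lambda>m. x \<omega> $ m) L))
     = (\<Prod>B\<in>P. integral\<^sup>L M (\<lambda>\<omega>. prod_list (map (\<lambda>m. x \<omega> $ m) (filter (\<lambda>m. m \<in> B) L))))"
proof -
  have iv0: "indep_vars (\<lambda>_. borel) (\<lambda>B \<omega>. prod_list (map (restrict (\<lambda>i. x \<omega> $ i) B) (filter (\<lambda>m. m \<in> B) L))) P"
    by (rule indep_vars_compose2[OF ind]) (intro filt_meas, auto)
  have eq: "(\<lambda>B \<omega>. prod_list (map (restrict (\<lambda>i. x \<omega> $ i) B) (filter (\<lambda>m. m \<in> B) L)))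
     = (\<lambda>B \<omega>. prod_list (map (\<lambda>m. x \<omega> $ m) (filter (\<lambda>m. m \<in> B) L)))"
    by (intro ext arg_cong[where f=prod_list] map_cong) auto
  have iv: "indep_vars (\<lambda>_. borel) (\<lambda>B \<omega>. prod_list (map (\<lambda>m. x \<omega> $ m) (filter (\<lambda>m. m \<in> B) L))) P"
    using iv0 eq by simp
  have ints: "integrable M (\<lambda>\<omega>. prod_list (map (\<lambda>m. x \<omega> $ m) (filter (\<lambda>m. m \<in> B) L)))" for B
    using assms by (intro pl_int) (meson dual_order.trans length_filter_le)
  have "integral\<^sup>L M (\<lambda>\<omega>. prod_list (map (\<lambda>m. x \<omega> $ m) L))
      = integral\<^sup>L M (\<lambda>\<omega>. \<Prod>B\<in>P. prod_list (map (\<lambda>m. x \<omega> $ m) (filter (\<lambda>m. m \<in> B) L)))"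
    by (subst pl_split) rule
  also have "\<dots> = (\<Prod>B\<in>P. integral\<^sup>L M (\<lambda>\<omega>. prod_list (map (\<lambda>m. x \<omega> $ m) (filter (\<lambda>m. m \<in> B) L))))"
    by (rule indep_vars_lebesgue_integral[OF finP iv ints])
  finally show ?thesis .
qed

end


context bim begin

definition d :: "'n \<Rightarrow> 'n \<Rightarrow> real" where "d i j = (if i = j then 1 else 0)"

definition E4 where "E4 i j k l = integral\<^sup>L M (\<lambda>\<omega>. x \<omega> $ i * x \<omega> $ j * x \<omega> $ k * x \<omega> $ l)"

lemma E4_pl: "E4 i j k l = integral\<^sup>L M (\<lambda>\<omega>. prod_list (map (\<lambda>m. x \<omega> $ m) [i,j,k,l]))"
  unfolding E4_def by (simp add: mult.assoc)

lemma E4_comm1: "E4 i j k l = E4 i k j l"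
  unfolding E4_def by (simp add: mult_ac)
lemma E4_comm2: "E4 i j k l = E4 i l j k"
  unfolding E4_def by (simp add: mult_ac)

lemma filt_blk: "filter (\<lambda>n. n \<in> blk m) L = filter (\<lambda>n. blk n = blk m) L"
  by (intro filter_cong refl) (simp add: mem_iff[OF blk_in] eq_commute)

lemma single:
  assumes "length L \<le> 4" "filter (\<lambda>n. blk n = blk m) L = [m]"
  shows "integral\<^sup>L M (\<lambda>\<omega>. prod_list (map (\<lambda>m. x \<omega> $ m) L)) = 0"
proof -
  have "integral\<^sup>L M (\<lambda>\<omega>. prod_list (map (\<lambda>m. x \<omega> $ m) (filter (\<lambda>n. n \<in> blk m) L))) = 0"
    unfolding filt_blk assms(2) using mean0 by simp
  then show ?thesis unfolding pf[OF assms(1)] by (rule prod_zero[OF finP bexI[OF _ blk_in[of m]]])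
qed

lemma pair:
  assumes "blk b = blk a" "blk d' = blk c" "blk a \<noteq> blk c"
  shows "E4 a b c d' = d a b * d c d'"
proof -
  have g: "integral\<^sup>L M (\<lambda>\<omega>. prod_list (map (\<lambda>m. x \<omega> $ m) (filter (\<lambda>m. m \<in> B) [a,b,c,d'])))
     = (if B = blk a then d a b else 1) * (if B = blk c then d c d' else 1)" if B: "B \<in> P" for B
  proof -
    have ia: "a \<in> B \<longleftrightarrow> B = blk a" "b \<in> B \<longleftrightarrow> B = blk a" "c \<in> B \<longleftrightarrow> B = blk c" "d' \<in> B \<longleftrightarrow> B = blk c"
      using mem_iff[OF B] assms by auto
    show ?thesis
    proof (cases "B = blk a")
      case True
      then have nc: "B \<noteq> blk c" using assms(3) by simp
      have "a \<in> B" "b \<in> B" "c \<notin> B" "d' \<notin> B" using True nc unfolding ia by auto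
      then have "filter (\<lambda>m. m \<in> B) [a,b,c,d'] = [a,b]" by simp
      then show ?thesis using True nc by (simp add: cov d_def)
    next
      case na: False
      show ?thesis
      proof (cases "B = blk c")
        case True
        have "a \<notin> B" "b \<notin> B" "c \<in> B" "d' \<in> B" using True na unfolding ia by auto
        then have "filter (\<lambda>m. m \<in> B) [a,b,c,d'] = [c,d']" by simp
        then show ?thesis using True na by (simp add: cov d_def)
      next
        case False
        have "a \<notin> B" "b \<notin> B" "c \<notin> B" "d' \<notin> B" using False na unfolding ia by auto
        then have "filter (\<lambda>m. m \<in> B) [a,b,c,d'] = []" by simp
        then show ?thesis using False na by (simp add: prob_space)
      qed
    qed
  qed
  have "E4 a b c d' = (\<Prod>B\<in>P. integral\<^sup>L M (\<lambda>\<omega>. prod_list (map (\<lambda>m. x \<omega> $ m) (filter (\<lambda>m. m \<in> B) [a,b,c,d']))))"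
    unfolding E4_pl by (rule pf) simp
  also have "\<dots> = (\<Prod>B\<in>P. (if B = blk a then d a b else 1) * (if B = blk c then d c d' else 1))"
    by (rule prod.cong[OF refl g])
  also have "\<dots> = d a b * d c d'"
    by (simp add: prod.distrib prod.delta' finP blk_in)
  finally show ?thesis .
qed

lemma E4_off:
  assumes "\<not> (blk j = blk i \<and> blk k = blk i \<and> blk l = blk i)"
  shows "E4 i j k l = d i j * d k l + (if blk i \<noteq> blk j then d i k * d j l + d i l * d j k else 0)"
proof -
  have sing: "E4 i j k l = 0" if "filter (\<lambda>n. blk n = blk m) [i,j,k,l] = [m]" for m
    unfolding E4_pl by (rule single[OF _ that]) simp
  have dne: "d p q = 0" if "blk p \<noteq> blk q" for p q using that by (auto simp: d_def)
  show ?thesis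
  proof (cases "blk j = blk i")
    case True
    show ?thesis
    proof (cases "blk l = blk k")
      case True
      have "E4 i j k l = d i j * d k l" by (rule pair) (use True \<open>blk j = blk i\<close> assms in auto)
      then show ?thesis using \<open>blk j = blk i\<close> by simp
    next
      case False
      have "E4 i j k l = 0"
      proof (cases "blk k = blk i")
        case True
        then show ?thesis using False \<open>blk j = blk i\<close> by (intro sing[of l]) auto
      next
        case False2: False
        then show ?thesis using False \<open>blk j = blk i\<close> by (intro sing[of k]) auto
      qed
      then show ?thesis using False True dne[of k l] by auto
    qed
  next
    case False
    have dij: "d i j = 0" using False dne[of i j] by auto
    consider "blk k = blk i" "blk l = blk j" | "blk k = blk j" "blk l = blk i"
      | "\<not> (blk k = blk i \<and> blk l = blk j)" "\<not> (blk k = blk j \<and> blk l = blk i)" by blast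
    then show ?thesis
    proof cases
      case 1
      have "E4 i j k l = E4 i k j l" by (rule E4_comm1)
      also have "\<dots> = d i k * d j l" by (rule pair) (use 1 False in auto)
      finally have "E4 i j k l = d i k * d j l" .
      then show ?thesis using dij dne[of i l] 1 False by auto
    next
      case 2
      have "E4 i j k l = E4 i l j k" by (rule E4_comm2)
      also have "\<dots> = d i l * d j k" by (rule pair) (use 2 False in auto)
      finally have "E4 i j k l = d i l * d j k" .
      then show ?thesis using dij dne[of i k] 2 False by auto
    next
      case 3
      have "E4 i j k l = 0"
      proof (cases "blk k = blk i")
        case True
        then show ?thesis using 3 False by (intro sing[of j]) auto
      next
        case ki: False
        show ?thesis
        proof (cases "blk k = blk j")
          case True
          then show ?thesis using 3 False by (intro sing[of i]) auto
        next
          case kj: False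
          show ?thesis
          proof (cases "blk l = blk k")
            case True
            then show ?thesis using ki kj False by (intro sing[of i]) auto
          next
            case False2: False
            then show ?thesis using ki kj False by (intro sing[of k]) auto
          qed
        qed
      qed
      moreover have "d i k * d j l = 0" using 3 by (auto simp: d_def)
      moreover have "d i l * d j k = 0" using 3 by (auto simp: d_def)
      ultimately show ?thesis using dij False by (metis add_0 mult_zero_left)
    qed
  qed
qed

end


context bim begin

lemma int2: "integrable M (\<lambda>\<omega>. x \<omega> $ i * x \<omega> $ j)"
  using pl_int[of "[i,j]"] by simp

lemma int4: "integrable M (\<lambda>\<omega>. x \<omega> $ i * x \<omega> $ j * x \<omega> $ k * x \<omega> $ l)"
  using pl_int[of "[i,j,k,l]"] by (simp add: mult.assoc)

lemma intsum4:
  "integrable M (\<lambda>\<omega>. \<Sum>i\<in>I. \<Sum>j\<in>J. \<Sum>k\<in>K. \<Sum>l\<in>L. c i j k l * (x \<omega> $ i * x \<omega> $ j * x \<omega> $ k * x \<omega> $ l))"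
  "integral\<^sup>L M (\<lambda>\<omega>. \<Sum>i\<in>I. \<Sum>j\<in>J. \<Sum>k\<in>K. \<Sum>l\<in>L. c i j k l * (x \<omega> $ i * x \<omega> $ j * x \<omega> $ k * x \<omega> $ l))
   = (\<Sum>i\<in>I. \<Sum>j\<in>J. \<Sum>k\<in>K. \<Sum>l\<in>L. c i j k l * E4 i j k l)"
  by (simp_all add: integrable_sum int4 E4_def)

lemma intsum2:
  "integrable M (\<lambda>\<omega>. \<Sum>i\<in>I. \<Sum>j\<in>J. c i j * (x \<omega> $ i * x \<omega> $ j))"
  "integral\<^sup>L M (\<lambda>\<omega>. \<Sum>i\<in>I. \<Sum>j\<in>J. c i j * (x \<omega> $ i * x \<omega> $ j))
   = (\<Sum>i\<in>I. \<Sum>j\<in>J. c i j * d i j)"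
  by (simp_all add: integrable_sum int2 cov d_def)

lemma sq2: "(\<Sum>i\<in>I. \<Sum>j\<in>J. c i j * (y i * y j))\<^sup>2 =
   (\<Sum>i\<in>I. \<Sum>j\<in>J. \<Sum>k\<in>I. \<Sum>l\<in>J. (c i j * c k l) * (y i * y j * y k * y l))" for y :: "'n \<Rightarrow> real"
proof -
  let ?f = "\<lambda>i j. c i j * (y i * y j)"
  have "(\<Sum>i\<in>I. \<Sum>j\<in>J. ?f i j)\<^sup>2 = (\<Sum>i\<in>I. \<Sum>j\<in>J. ?f i j * (\<Sum>k\<in>I. \<Sum>l\<in>J. ?f k l))"
    by (simp only: power2_eq_square sum_distrib_right)
  also have "\<dots> = (\<Sum>i\<in>I. \<Sum>j\<in>J. \<Sum>k\<in>I. \<Sum>l\<in>J. ?f i j * ?f k l)"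
    by (simp only: sum_distrib_left)
  also have "\<dots> = (\<Sum>i\<in>I. \<Sum>j\<in>J. \<Sum>k\<in>I. \<Sum>l\<in>J. (c i j * c k l) * (y i * y j * y k * y l))"
    by (simp add: mult_ac)
  finally show ?thesis .
qed

lemma var_eq:
  assumes "integrable M X" "integrable M (\<lambda>\<omega>. (X \<omega>)\<^sup>2)"
  shows "var_of M X = integral\<^sup>L M (\<lambda>\<omega>. (X \<omega>)\<^sup>2) - (integral\<^sup>L M X)\<^sup>2"
proof -
  define c where "c = integral\<^sup>L M X"
  have "(\<lambda>\<omega>. (X \<omega> - c)\<^sup>2) = (\<lambda>\<omega>. ((X \<omega>)\<^sup>2 - 2 * c * X \<omega>) + c\<^sup>2)"
    by (simp add: power2_diff algebra_simps)
  then have "var_of M X = integral\<^sup>L M (\<lambda>\<omega>. ((X \<omega>)\<^sup>2 - 2 * c * X \<omega>) + c\<^sup>2)"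
    unfolding var_of_def c_def by simp
  also have "\<dots> = integral\<^sup>L M (\<lambda>\<omega>. (X \<omega>)\<^sup>2) - 2 * c * c + c\<^sup>2"
    using assms by (simp add: prob_space c_def)
  finally show ?thesis by (simp add: c_def power2_eq_square)
qed

lemma Q_expand: "x \<omega> \<bullet> (A *v x \<omega>) = (\<Sum>i\<in>UNIV. \<Sum>j\<in>UNIV. A $ i $ j * (x \<omega> $ i * x \<omega> $ j))"
  by (simp add: inner_vec_def matrix_vector_mult_def sum_distrib_left mult_ac)

end



lemma sqt: "(\<Sum>i\<in>I. \<Sum>j\<in>J. t i j)\<^sup>2 = (\<Sum>i\<in>I. \<Sum>j\<in>J. \<Sum>k\<in>I. \<Sum>l\<in>J. t i j * t k l)" for t :: "'n \<Rightarrow> 'n \<Rightarrow> real"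
proof -
  have "(\<Sum>i\<in>I. \<Sum>j\<in>J. t i j)\<^sup>2 = (\<Sum>i\<in>I. \<Sum>j\<in>J. t i j * (\<Sum>k\<in>I. \<Sum>l\<in>J. t k l))"
    by (simp only: power2_eq_square sum_distrib_right)
  also have "\<dots> = (\<Sum>i\<in>I. \<Sum>j\<in>J. \<Sum>k\<in>I. \<Sum>l\<in>J. t i j * t k l)"
    by (simp only: sum_distrib_left)
  finally show ?thesis .
qed

context bim begin

lemma sumP: "(\<Sum>B\<in>P. \<Sum>i\<in>B. f i) = (\<Sum>i\<in>UNIV. f i)"
proof -
  have U: "\<Union>P = UNIV" using partition_onD1[OF part] by simp
  have "(\<Sum>i\<in>\<Union>P. f i) = (\<Sum>B\<in>P. \<Sum>i\<in>B. f i)"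
  proof (rule sum.Union_disjoint[where g=f, simplified comp_def])
    show "\<forall>A\<in>P. finite A" by simp
    show "\<forall>A\<in>P. \<forall>B\<in>P. A \<noteq> B \<longrightarrow> A \<inter> B = {}"
      using partition_onD2[OF part] by (auto simp: pairwise_def disjnt_def)
  qed
  then show ?thesis using U by simp
qed

lemma sumP2: "(\<Sum>B\<in>P. \<Sum>i\<in>B. g B i) = (\<Sum>i\<in>UNIV. g (blk i) i)"
proof -
  have "(\<Sum>B\<in>P. \<Sum>i\<in>B. g B i) = (\<Sum>B\<in>P. \<Sum>i\<in>B. g (blk i) i)"
    by (intro sum.cong refl) (simp add: blk_eq)
  then show ?thesis using sumP[of "\<lambda>i. g (blk i) i"] by simp
qed

lemma blk_set: "blk i = {j. blk j = blk i}"
  by (auto simp: mem_iff[OF blk_in])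

lemma sum_blk: "(\<Sum>j\<in>blk i. (g::'n\<Rightarrow>real) j) = (\<Sum>j\<in>UNIV. of_bool (blk j = blk i) * g j)"
proof -
  have "(\<Sum>j\<in>UNIV. of_bool (blk j = blk i) * g j) = (\<Sum>j\<in>UNIV. if blk j = blk i then g j else 0)"
    by (intro sum.cong refl) simp
  also have "\<dots> = sum g {j\<in>UNIV. blk j = blk i}"
    by (rule sum.inter_filter[symmetric]) simp
  also have "{j\<in>UNIV. blk j = blk i} = blk i" using blk_set[of i] by auto
  finally show ?thesis ..
qed

definition w :: "'n \<Rightarrow> 'n \<Rightarrow> 'n \<Rightarrow> 'n \<Rightarrow> real" where
  "w i j k l = of_bool (blk j = blk i) * of_bool (blk k = blk i) * of_bool (blk l = blk i)"

lemma F1: "(\<Sum>i\<in>UNIV. \<Sum>j\<in>UNIV. \<Sum>k\<in>UNIV. \<Sum>l\<in>UNIV. w i j k l * F i j k l)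
  = (\<Sum>B\<in>P. \<Sum>i\<in>B. \<Sum>j\<in>B. \<Sum>k\<in>B. \<Sum>l\<in>B. F i j k l)"
proof -
  have "(\<Sum>B\<in>P. \<Sum>i\<in>B. \<Sum>j\<in>B. \<Sum>k\<in>B. \<Sum>l\<in>B. F i j k l)
     = (\<Sum>i\<in>UNIV. \<Sum>j\<in>blk i. \<Sum>k\<in>blk i. \<Sum>l\<in>blk i. F i j k l)"
    by (rule sumP2)
  also have "\<dots> = (\<Sum>i\<in>UNIV. \<Sum>j\<in>UNIV. of_bool (blk j = blk i) * (\<Sum>k\<in>UNIV. of_bool (blk k = blk i) *
       (\<Sum>l\<in>UNIV. of_bool (blk l = blk i) * F i j k l)))"
    by (simp only: sum_blk)
  also have "\<dots> = (\<Sum>i\<in>UNIV. \<Sum>j\<in>UNIV. \<Sum>k\<in>UNIV. \<Sum>l\<in>UNIV. w i j k l * F i j k l)"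
    by (simp only: w_def sum_distrib_left mult.assoc)
  finally show ?thesis ..
qed

lemma qB_bound:
  "(\<Sum>i\<in>B. \<Sum>j\<in>B. A $ i $ j * (x \<omega> $ i * x \<omega> $ j))\<^sup>2
    \<le> (onorm (\<lambda>v. A *v v))\<^sup>2 * (real (card B) * (\<Sum>i\<in>B. (x \<omega> $ i) ^ 4))"
proof -
  define y where "y = (\<chi> i. if i \<in> B then x \<omega> $ i else 0)"
  define on where "on = onorm (\<lambda>v. A *v v)"
  have on0: "0 \<le> on" unfolding on_def by (rule onorm_pos_le) simp
  have q: "(\<Sum>i\<in>B. \<Sum>j\<in>B. A $ i $ j * (x \<omega> $ i * x \<omega> $ j)) = y \<bullet> (A *v y)"
  proof -
    have "y \<bullet> (A *v y) = (\<Sum>i\<in>UNIV. if i \<in> B then (\<Sum>j\<in>UNIV. if j \<in> B then A $ i $ j * (x \<omega> $ i * x \<omega> $ j) else 0) else 0)"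
      unfolding inner_vec_def matrix_vector_mult_def y_def
      by (intro sum.cong refl) (auto simp: sum_distrib_left mult_ac intro!: sum.cong)
    also have "\<dots> = (\<Sum>i\<in>B. \<Sum>j\<in>B. A $ i $ j * (x \<omega> $ i * x \<omega> $ j))"
    proof -
      have "(\<Sum>j\<in>UNIV. if j \<in> B then A $ i $ j * (x \<omega> $ i * x \<omega> $ j) else 0) = (\<Sum>j\<in>B. A $ i $ j * (x \<omega> $ i * x \<omega> $ j))" for i
        using sum.inter_restrict[of UNIV "\<lambda>j. A $ i $ j * (x \<omega> $ i * x \<omega> $ j)" B] by simp
      then have "(\<Sum>i\<in>UNIV. if i \<in> B then (\<Sum>j\<in>UNIV. if j \<in> B then A $ i $ j * (x \<omega> $ i * x \<omega> $ j) else 0) else 0)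
         = (\<Sum>i\<in>UNIV. if i \<in> B then (\<Sum>j\<in>B. A $ i $ j * (x \<omega> $ i * x \<omega> $ j)) else 0)"
        by (intro sum.cong refl) simp
      then show ?thesis using sum.inter_restrict[of UNIV "\<lambda>i. \<Sum>j\<in>B. A $ i $ j * (x \<omega> $ i * x \<omega> $ j)" B] by simp
    qed
    finally show ?thesis ..
  qed
  have n2: "(norm y)\<^sup>2 = (\<Sum>i\<in>B. (x \<omega> $ i)\<^sup>2)"
  proof -
    have "(norm y)\<^sup>2 = (\<Sum>i\<in>UNIV. if i \<in> B then (x \<omega> $ i)\<^sup>2 else 0)"
      unfolding power2_norm_eq_inner inner_vec_def y_def
      by (intro sum.cong refl) (auto simp: power2_eq_square)
    also have "\<dots> = (\<Sum>i\<in>B. (x \<omega> $ i)\<^sup>2)" using sum.inter_restrict[of UNIV "\<lambda>i. (x \<omega> $ i)\<^sup>2" B] by simp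
    finally show ?thesis .
  qed
  have "\<bar>y \<bullet> (A *v y)\<bar> \<le> norm y * norm (A *v y)" by (rule Cauchy_Schwarz_ineq2)
  also have "\<dots> \<le> norm y * (on * norm y)"
    unfolding on_def by (intro mult_left_mono onorm) auto
  finally have ab: "\<bar>y \<bullet> (A *v y)\<bar> \<le> on * (norm y)\<^sup>2" by (simp add: power2_eq_square mult_ac)
  have "(y \<bullet> (A *v y))\<^sup>2 = \<bar>y \<bullet> (A *v y)\<bar>\<^sup>2" by simp
  also have "\<dots> \<le> (on * (norm y)\<^sup>2)\<^sup>2" by (rule power_mono[OF ab]) simp
  also have "\<dots> = on\<^sup>2 * (\<Sum>i\<in>B. (x \<omega> $ i)\<^sup>2)\<^sup>2" by (simp add: n2 power_mult_distrib)
  also have "\<dots> \<le> on\<^sup>2 * (real (card B) * (\<Sum>i\<in>B. (x \<omega> $ i) ^ 4))"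
  proof (rule mult_left_mono)
    have "(\<Sum>i\<in>B. (x \<omega> $ i)\<^sup>2)\<^sup>2 \<le> (\<Sum>i\<in>B. ((x \<omega> $ i)\<^sup>2)\<^sup>2) * card B"
      by (rule sum_squared_le_sum_of_squares)
    then show "(\<Sum>i\<in>B. (x \<omega> $ i)\<^sup>2)\<^sup>2 \<le> real (card B) * (\<Sum>i\<in>B. (x \<omega> $ i) ^ 4)"
      by (simp add: mult.commute flip: power_mult)
  qed simp
  finally show ?thesis using q by (simp add: on_def)
qed

end



lemma frob: "(\<Sum>i\<in>UNIV. \<Sum>j\<in>UNIV. (A$i$j)\<^sup>2) \<le> real CARD('n) * (onorm (\<lambda>v. A *v v))\<^sup>2"
  for A :: "real^'n::finite^'n"
proof -
  have col: "(\<Sum>i\<in>UNIV. (A$i$j)\<^sup>2) \<le> (onorm (\<lambda>v. A *v v))\<^sup>2" for j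
  proof -
    have "(\<Sum>i\<in>UNIV. (A$i$j)\<^sup>2) = (norm (A *v axis j 1))\<^sup>2"
      unfolding matrix_vector_mult_basis power2_norm_eq_inner inner_vec_def column_def
      by (simp add: power2_eq_square)
    also have "\<dots> \<le> (onorm (\<lambda>v. A *v v) * norm (axis j (1::real)))\<^sup>2"
      by (intro power_mono onorm) auto
    finally show ?thesis by simp
  qed
  have "(\<Sum>i\<in>UNIV. \<Sum>j\<in>UNIV. (A$i$j)\<^sup>2) = (\<Sum>j\<in>UNIV. \<Sum>i\<in>UNIV. (A$i$j)\<^sup>2)" by (rule sum.swap)
  also have "\<dots> \<le> (\<Sum>j\<in>(UNIV::'n set). (onorm (\<lambda>v. A *v v))\<^sup>2)" by (intro sum_mono col)
  finally show ?thesis by simp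
qed

lemma t3: "(\<Sum>i\<in>UNIV. \<Sum>j\<in>UNIV. of_bool (c i j) * ((A$i$j)\<^sup>2 + A$i$j * A$j$i)) \<le> 2 * (\<Sum>i\<in>UNIV. \<Sum>j\<in>UNIV. (A$i$j)\<^sup>2)"
  for A :: "real^'n::finite^'n"
proof -
  have t: "of_bool b * (p\<^sup>2 + p * q) \<le> 3/2 * p\<^sup>2 + 1/2 * q\<^sup>2" for b and p q :: real
  proof -
    have "p * q \<le> (p\<^sup>2 + q\<^sup>2)/2" using sum_squares_bound[of p q] by (simp add: field_simps)
    moreover have "0 \<le> p\<^sup>2 + q\<^sup>2" by simp
    ultimately show ?thesis by (cases b) simp_all
  qed
  have "(\<Sum>i\<in>UNIV. \<Sum>j\<in>UNIV. of_bool (c i j) * ((A$i$j)\<^sup>2 + A$i$j * A$j$i))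
     \<le> (\<Sum>i\<in>UNIV. \<Sum>j\<in>UNIV. 3/2 * (A$i$j)\<^sup>2 + 1/2 * (A$j$i)\<^sup>2)"
    by (intro sum_mono t)
  also have "\<dots> = 3/2 * (\<Sum>i\<in>UNIV. \<Sum>j\<in>UNIV. (A$i$j)\<^sup>2) + 1/2 * (\<Sum>i\<in>UNIV. \<Sum>j\<in>UNIV. (A$j$i)\<^sup>2)"
    by (simp add: sum.distrib sum_distrib_left)
  also have "(\<Sum>i\<in>UNIV. \<Sum>j\<in>UNIV. (A$j$i)\<^sup>2) = (\<Sum>i\<in>UNIV. \<Sum>j\<in>UNIV. (A$i$j)\<^sup>2)"
    by (rule sum.swap)
  finally show ?thesis by simp
qed


context bim begin

lemma gen: "(\<Sum>k\<in>UNIV. \<Sum>l\<in>UNIV. f k l * (d p k * d q l)) = (f p q :: real)" for f :: "'n::finite \<Rightarrow> 'n \<Rightarrow> real"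
proof -
  have "(\<Sum>l\<in>UNIV. f k l * (d p k * d q l)) = (if k = p then f k q else 0)" for k
  proof (cases "k = p")
    case True
    have "(\<Sum>l\<in>UNIV. f k l * (d p k * d q l)) = (\<Sum>l\<in>UNIV. if q = l then f k l else 0)"
      by (intro sum.cong refl) (auto simp: d_def True)
    then show ?thesis using True by simp
  next
    case False then show ?thesis by (simp add: d_def)
  qed
  then show ?thesis by simp
qed
lemma a1: "(\<Sum>k\<in>UNIV. \<Sum>l\<in>UNIV. (A::real^'n::finite^'n) $ k $ l * (d i k * d j l + d i l * d j k)) = A$i$j + A$j$i"
proof -
  have "(\<Sum>k\<in>UNIV. \<Sum>l\<in>UNIV. A $ k $ l * (d i l * d j k)) = (\<Sum>k\<in>UNIV. \<Sum>l\<in>UNIV. A $ k $ l * (d j k * d i l))"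
    by (simp add: mult.commute)
  then show ?thesis using gen[of "\<lambda>k l. A $ k $ l" i j] gen[of "\<lambda>k l. A $ k $ l" j i]
    by (simp add: distrib_left sum.distrib)
qed

lemma EqB:
  "integrable M (\<lambda>\<omega>. (\<Sum>i\<in>B. \<Sum>j\<in>B. A $ i $ j * (x \<omega> $ i * x \<omega> $ j))\<^sup>2)"
  "integral\<^sup>L M (\<lambda>\<omega>. (\<Sum>i\<in>B. \<Sum>j\<in>B. A $ i $ j * (x \<omega> $ i * x \<omega> $ j))\<^sup>2)
    = (\<Sum>i\<in>B. \<Sum>j\<in>B. \<Sum>k\<in>B. \<Sum>l\<in>B. (A $ i $ j * A $ k $ l) * E4 i j k l)"
  by (simp_all only: sq2 intsum4)

definition K where "K = (MAX i. integral\<^sup>L M (\<lambda>\<omega>. (x \<omega> $ i) ^ 4))"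

lemma le_K: "integral\<^sup>L M (\<lambda>\<omega>. (x \<omega> $ i) ^ 4) \<le> K"
  unfolding K_def by (rule Max_ge) auto

lemma EqB_le:
  "integral\<^sup>L M (\<lambda>\<omega>. (\<Sum>i\<in>B. \<Sum>j\<in>B. A $ i $ j * (x \<omega> $ i * x \<omega> $ j))\<^sup>2)
    \<le> (onorm (\<lambda>v. A *v v))\<^sup>2 * (real (card B) * (real (card B) * K))"
proof -
  define on where "on = onorm (\<lambda>v. A *v v)"
  have iR: "integrable M (\<lambda>\<omega>. on\<^sup>2 * (real (card B) * (\<Sum>i\<in>B. (x \<omega> $ i) ^ 4)))"
    using m4 by (intro integrable_mult_right integrable_sum) auto
  have "integral\<^sup>L M (\<lambda>\<omega>. (\<Sum>i\<in>B. \<Sum>j\<in>B. A $ i $ j * (x \<omega> $ i * x \<omega> $ j))\<^sup>2)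
     \<le> integral\<^sup>L M (\<lambda>\<omega>. on\<^sup>2 * (real (card B) * (\<Sum>i\<in>B. (x \<omega> $ i) ^ 4)))"
    by (rule Bochner_Integration.integral_mono[OF EqB(1) iR]) (unfold on_def, rule qB_bound)
  also have "\<dots> = on\<^sup>2 * (real (card B) * (\<Sum>i\<in>B. integral\<^sup>L M (\<lambda>\<omega>. (x \<omega> $ i) ^ 4)))"
    using m4 by (simp add: Bochner_Integration.integral_sum)
  also have "\<dots> \<le> on\<^sup>2 * (real (card B) * (real (card B) * K))"
    by (intro mult_left_mono sum_bounded_above le_K) auto
  finally show ?thesis by (simp add: on_def)
qed

lemma T2_nonneg: "0 \<le> (\<Sum>i\<in>UNIV. \<Sum>j\<in>UNIV. \<Sum>k\<in>UNIV. \<Sum>l\<in>UNIV. w i j k l * ((A $ i $ j * A $ k $ l) * (d i j * d k l)))"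
proof -
  have "(\<Sum>i\<in>UNIV. \<Sum>j\<in>UNIV. \<Sum>k\<in>UNIV. \<Sum>l\<in>UNIV. w i j k l * ((A $ i $ j * A $ k $ l) * (d i j * d k l)))
    = (\<Sum>B\<in>P. \<Sum>i\<in>B. \<Sum>j\<in>B. \<Sum>k\<in>B. \<Sum>l\<in>B. (A $ i $ j * d i j) * (A $ k $ l * d k l))"
    unfolding F1 by (simp add: mult_ac)
  also have "\<dots> = (\<Sum>B\<in>P. (\<Sum>i\<in>B. \<Sum>j\<in>B. A $ i $ j * d i j)\<^sup>2)"
    by (simp only: sqt)
  finally show ?thesis by (simp add: sum_nonneg)
qed

lemma term_id:
  "(A $ i $ j * A $ k $ l) * E4 i j k l - (A $ i $ j * d i j) * (A $ k $ l * d k l)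
   = w i j k l * ((A $ i $ j * A $ k $ l) * E4 i j k l) - w i j k l * ((A $ i $ j * A $ k $ l) * (d i j * d k l))
     + of_bool (blk i \<noteq> blk j) * (A $ i $ j * (A $ k $ l * (d i k * d j l + d i l * d j k)))"
proof (cases "blk j = blk i \<and> blk k = blk i \<and> blk l = blk i")
  case True
  then show ?thesis by (simp add: w_def mult_ac)
next
  case False
  then have w0: "w i j k l = 0" by (auto simp: w_def)
  show ?thesis unfolding w0 E4_off[OF False] by (auto simp: algebra_simps)
qed

end


context bim begin

lemma main:
  "var_of M (\<lambda>\<omega>. x \<omega> \<bullet> (A *v x \<omega>))
   \<le> (onorm (\<lambda>v. A *v v))\<^sup>2 * (K * (\<Sum>B\<in>P. (real (card B))\<^sup>2) + 2 * real CARD('n))"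
proof -
  define on where "on = onorm (\<lambda>v. A *v v)"
  define Q where "Q = (\<lambda>\<omega>. \<Sum>i\<in>UNIV. \<Sum>j\<in>UNIV. A $ i $ j * (x \<omega> $ i * x \<omega> $ j))"
  have Qe: "(\<lambda>\<omega>. x \<omega> \<bullet> (A *v x \<omega>)) = Q" unfolding Q_def by (rule ext) (rule Q_expand)
  have iQ: "integrable M Q" unfolding Q_def by (rule intsum2(1))
  have iQ2: "integrable M (\<lambda>\<omega>. (Q \<omega>)\<^sup>2)" unfolding Q_def by (simp only: sq2 intsum4(1))
  have EQ: "integral\<^sup>L M Q = (\<Sum>i\<in>UNIV. \<Sum>j\<in>UNIV. A $ i $ j * d i j)" unfolding Q_def by (rule intsum2(2))
  have EQ2: "integral\<^sup>L M (\<lambda>\<omega>. (Q \<omega>)\<^sup>2) = (\<Sum>i\<in>UNIV. \<Sum>j\<in>UNIV. \<Sum>k\<in>UNIV. \<Sum>l\<in>UNIV. (A $ i $ j * A $ k $ l) * E4 i j k l)"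
    unfolding Q_def by (simp only: sq2 intsum4(2))
  have EQsq: "(integral\<^sup>L M Q)\<^sup>2 = (\<Sum>i\<in>UNIV. \<Sum>j\<in>UNIV. \<Sum>k\<in>UNIV. \<Sum>l\<in>UNIV. (A $ i $ j * d i j) * (A $ k $ l * d k l))"
    unfolding EQ by (rule sqt)
  define T1 where "T1 = (\<Sum>i\<in>UNIV. \<Sum>j\<in>UNIV. \<Sum>k\<in>UNIV. \<Sum>l\<in>UNIV. w i j k l * ((A $ i $ j * A $ k $ l) * E4 i j k l))"
  define T2 where "T2 = (\<Sum>i\<in>UNIV. \<Sum>j\<in>UNIV. \<Sum>k\<in>UNIV. \<Sum>l\<in>UNIV. w i j k l * ((A $ i $ j * A $ k $ l) * (d i j * d k l)))"
  define T3 where "T3 = (\<Sum>i\<in>UNIV. \<Sum>j\<in>UNIV. \<Sum>k\<in>UNIV. \<Sum>l\<in>UNIV. of_bool (blk i \<noteq> blk j) * (A $ i $ j * (A $ k $ l * (d i k * d j l + d i l * d j k))))"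
  have "var_of M (\<lambda>\<omega>. x \<omega> \<bullet> (A *v x \<omega>)) = integral\<^sup>L M (\<lambda>\<omega>. (Q \<omega>)\<^sup>2) - (integral\<^sup>L M Q)\<^sup>2"
    unfolding Qe by (rule var_eq[OF iQ iQ2])
  also have "\<dots> = (\<Sum>i\<in>UNIV. \<Sum>j\<in>UNIV. \<Sum>k\<in>UNIV. \<Sum>l\<in>UNIV.
      (A $ i $ j * A $ k $ l) * E4 i j k l - (A $ i $ j * d i j) * (A $ k $ l * d k l))"
    unfolding EQ2 EQsq by (simp add: sum_subtractf)
  also have "\<dots> = T1 - T2 + T3"
    unfolding T1_def T2_def T3_def term_id by (simp add: sum_subtractf sum.distrib)
  finally have V: "var_of M (\<lambda>\<omega>. x \<omega> \<bullet> (A *v x \<omega>)) = T1 - T2 + T3" .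
  have "T1 = (\<Sum>B\<in>P. integral\<^sup>L M (\<lambda>\<omega>. (\<Sum>i\<in>B. \<Sum>j\<in>B. A $ i $ j * (x \<omega> $ i * x \<omega> $ j))\<^sup>2))"
    unfolding T1_def F1 EqB(2) ..
  also have "\<dots> \<le> (\<Sum>B\<in>P. on\<^sup>2 * (real (card B) * (real (card B) * K)))"
    unfolding on_def by (intro sum_mono EqB_le)
  also have "\<dots> = on\<^sup>2 * (K * (\<Sum>B\<in>P. (real (card B))\<^sup>2))"
    by (simp add: sum_distrib_left power2_eq_square mult_ac)
  finally have T1le: "T1 \<le> on\<^sup>2 * (K * (\<Sum>B\<in>P. (real (card B))\<^sup>2))" .
  have T2ge: "0 \<le> T2" unfolding T2_def by (rule T2_nonneg)
  have "T3 = (\<Sum>i\<in>UNIV. \<Sum>j\<in>UNIV. of_bool (blk i \<noteq> blk j) * A $ i $ j *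
      (\<Sum>k\<in>UNIV. \<Sum>l\<in>UNIV. A $ k $ l * (d i k * d j l + d i l * d j k)))"
    unfolding T3_def by (simp add: sum_distrib_left mult.assoc)
  also have "\<dots> = (\<Sum>i\<in>UNIV. \<Sum>j\<in>UNIV. of_bool (blk i \<noteq> blk j) * ((A $ i $ j)\<^sup>2 + A $ i $ j * A $ j $ i))"
    unfolding a1 by (simp add: power2_eq_square algebra_simps)
  also have "\<dots> \<le> 2 * (\<Sum>i\<in>UNIV. \<Sum>j\<in>UNIV. (A $ i $ j)\<^sup>2)" by (rule t3)
  also have "\<dots> \<le> 2 * (real CARD('n) * on\<^sup>2)" unfolding on_def using frob[of A] by simp
  finally have T3le: "T3 \<le> 2 * (real CARD('n) * on\<^sup>2)" .
  show ?thesis unfolding V on_def[symmetric] using T1le T2ge T3le by (simp add: algebra_simps)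
qed

end

theorem theorem1p6:
  fixes M :: "'a measure" and x :: "'a \<Rightarrow> real^'n::finite"
    and P :: "'n set set" and A :: "real^'n^'n"
  assumes "block_independent_model M x P"
    and "\<And>i. integrable M (\<lambda>\<omega>. (x \<omega> $ i) ^ 4)"
  shows "var_of M (\<lambda>\<omega>. x \<omega> \<bullet> (A *v x \<omega>))
         \<le> (onorm (\<lambda>v. A *v v))\<^sup>2 *
            ((MAX i. integral\<^sup>L M (\<lambda>\<omega>. (x \<omega> $ i) ^ 4)) * (\<Sum>B\<in>P. (real (card B))\<^sup>2)
             + 2 * real CARD('n))"
proof -
  interpret bim M x P
    using assms unfolding block_independent_model_def bim_def bim_axioms_def by auto
  show ?thesis using main[of A] unfolding K_def .
qed

end
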